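(* Let $s\ge 1$, $q=4^{2s}$, and let $\theta$ be the automorphism of $F_q$ given by $\theta(a)=a^{4^s}$. Let $n$ be an even positive integer and suppose $x^n-1=h(x)g(x)$ in $F_q[x;\theta]$, where the degree of $g(x)$ is odd. If $g(x)$ is a $\theta$-palindromic polynomial, then $h(x)$ is a palindromic polynomial.
   Context: $F_q[x;\theta]$ is the skew polynomial ring: polynomials $\sum a_ix^i$ with $a_i\in F_q$, usual addition, and multiplication determined by $xa=\theta(a)x$ for $a\in F_q$. A polynomial $f(x)=a_0+a_1x+\dots+a_tx^t$ of degree $t$ is palindromic if $a_i=a_{t-i}$ for all $i\in\{0,\ldots,t\}$, and $\theta$-palindromic if $a_i=\theta(a_{t-i})$ for all $i\in\{0,\ldots,t\}$. *)

theory Defs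
  imports "HOL-Computational_Algebra.Polynomial" "HOL-Library.Cardinality"
begin

text \<open>Multiplication in the skew polynomial ring F[x;theta], with x a = theta(a) x.
  Polynomials are represented by their coefficient lists (type 'a poly, coefficient i
  belongs to x^i, coefficients written on the left).\<close>
definition skew_mult :: "('a::comm_ring_1 \<Rightarrow> 'a) \<Rightarrow> 'a poly \<Rightarrow> 'a poly \<Rightarrow> 'a poly" where
  "skew_mult \<theta> f g =
     (\<Sum>i\<le>degree f. \<Sum>j\<le>degree g. monom (coeff f i * (\<theta> ^^ i) (coeff g j)) (i + j))"

definition palindromic :: "'a::zero poly \<Rightarrow> bool" where
  "palindromic f \<longleftrightarrow> (\<forall>i\<le>degree f. coeff f i = coeff f (degree f - i))"

definition theta_palindromic :: "('a \<Rightarrow> 'a) \<Rightarrow> 'a::zero poly \<Rightarrow> bool" where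
  "theta_palindromic \<theta> f \<longleftrightarrow> (\<forall>i\<le>degree f. coeff f i = \<theta> (coeff f (degree f - i)))"

end

theory Submission imports Defs begin
lemma fermat_ff:
  fixes a :: "'a::{field,finite}"
  shows "a ^ CARD('a) = a"
proof (cases "a = 0")
  case True then show ?thesis by (simp add: power_0_left)
next
  case False
  let ?S = "UNIV - {0::'a}"
  have inj: "inj_on (\<lambda>x. a * x) ?S" using False by (auto simp: inj_on_def)
  have img: "(\<lambda>x. a * x) ` ?S = ?S"
  proof
    show "(\<lambda>x. a * x) ` ?S \<subseteq> ?S" using False by auto
    show "?S \<subseteq> (\<lambda>x. a * x) ` ?S"
    proof
      fix y assume "y \<in> ?S"
      then have "y = a * (y / a)" "y / a \<in> ?S" using False by auto
      then show "y \<in> (\<lambda>x. a * x) ` ?S" by blast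
    qed
  qed
  have "prod (\<lambda>x. a * x) ?S = prod id ?S"
    using prod.reindex[OF inj, of id] img by simp
  moreover have "prod (\<lambda>x. a * x) ?S = a ^ card ?S * prod id ?S"
    by (simp add: prod.distrib)
  moreover have "prod id ?S \<noteq> 0" by simp
  ultimately have "a ^ card ?S = 1" by simp
  moreover have "card ?S = CARD('a) - 1" by (simp add: card_Diff_singleton)
  moreover have "CARD('a) \<ge> 1" by (simp add: Suc_leI)
  ultimately show ?thesis
    by (metis One_nat_def Suc_diff_le diff_Suc_1 mult.commute mult_1 power_Suc)
qed
lemma sum_atMost_rev': "(\<Sum>i\<le>m. f i) = (\<Sum>i\<le>m. f (m - i))" for f :: "nat \<Rightarrow> 'b::comm_monoid_add"
  by (rule sum.reindex_bij_witness[where i="\<lambda>i. m - i" and j="\<lambda>i. m - i"]) auto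

lemma double_rev:
  fixes F :: "nat \<Rightarrow> nat \<Rightarrow> 'b::comm_monoid_add"
  shows "(\<Sum>i\<le>m. \<Sum>j\<le>k. F i j) = (\<Sum>i\<le>m. \<Sum>j\<le>k. F (m - i) (k - j))"
proof -
  have "(\<Sum>i\<le>m. \<Sum>j\<le>k. F i j) = (\<Sum>i\<le>m. \<Sum>j\<le>k. F (m - i) j)"
    by (rule sum_atMost_rev')
  also have "\<dots> = (\<Sum>i\<le>m. \<Sum>j\<le>k. F (m - i) (k - j))"
    by (rule sum.cong[OF refl], rule sum_atMost_rev')
  finally show ?thesis .
qed

lemma coeff_skew:
  "coeff (skew_mult T f g) l = (\<Sum>i\<le>degree f. \<Sum>j\<le>degree g.
      if i + j = l then coeff f i * (T ^^ i) (coeff g j) else 0)"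
  by (simp add: skew_mult_def coeff_sum coeff_monom)

lemma inner_delta:
  "(\<Sum>j\<le>(k::nat). if i + j = l then f j else 0) = (if i \<le> l \<and> l - i \<le> k then f (l - i) else (0::'b::comm_monoid_add))"
proof (cases "i \<le> l")
  case True
  have "(\<Sum>j\<le>k. if i + j = l then f j else 0) = (\<Sum>j\<le>k. if j = l - i then f j else 0)"
    by (rule sum.cong) (use True in auto)
  then show ?thesis using True by simp
next
  case False
  then show ?thesis by (auto intro!: sum.neutral)
qed

lemma collapse:
  fixes a :: "nat \<Rightarrow> 'b::comm_ring_1"
  assumes "D \<le> m" "\<And>i. D < i \<Longrightarrow> i \<le> m \<Longrightarrow> a i = 0"
  shows "(\<Sum>i\<le>m. \<Sum>j\<le>k. if i + j = D + k then a i * (T ^^ i) (b j) else 0) = a D * (T ^^ D) (b k)"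
proof -
  have "(\<Sum>i\<le>m. \<Sum>j\<le>k. if i + j = D + k then a i * (T ^^ i) (b j) else 0)
      = (\<Sum>i\<le>m. if i = D then a D * (T ^^ D) (b k) else 0)"
  proof (rule sum.cong)
    fix i assume i: "i \<in> {..m}"
    show "(\<Sum>j\<le>k. if i + j = D + k then a i * (T ^^ i) (b j) else 0) = (if i = D then a D * (T ^^ D) (b k) else 0)"
      unfolding inner_delta using assms(2)[of i] i by auto
  qed simp
  then show ?thesis using assms(1) by simp
qed

theorem theorem4:
  fixes s n :: nat and h g :: "'a::{field,finite} poly"
  assumes "s \<ge> 1"
    and "CARD('a) = 4 ^ (2 * s)"
    and "even n" and "n > 0"
    and "monom 1 n - 1 = skew_mult (\<lambda>a. a ^ (4 ^ s)) h g"
    and "odd (degree g)"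
    and "theta_palindromic (\<lambda>a. a ^ (4 ^ s)) g"
  shows "palindromic h"
proof -
  define T where "T = (\<lambda>a::'a. a ^ (4 ^ s))"
  define m where "m = degree h"
  define k where "k = degree g"
  define S where "S = (\<lambda>(a::nat \<Rightarrow> 'a) l. \<Sum>i\<le>m. \<Sum>j\<le>k. if i + j = l then a i * (T ^^ i) (coeff g j) else 0)"
  define c where "c = (\<lambda>l. coeff (monom (1::'a) n - 1) l)"
  have cS: "c l = S (coeff h) l" for l
    unfolding c_def S_def m_def k_def T_def assms(5) coeff_skew ..
  have TT: "T (T x) = x" for x
  proof -
    have "T (T x) = x ^ (4 ^ s * 4 ^ s)" unfolding T_def by (simp add: power_mult)
    also have "4 ^ s * 4 ^ s = CARD('a)" using assms(2) by (simp add: power_add[symmetric] mult_2)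
    finally show ?thesis by (simp add: fermat_ff)
  qed
  have T0: "T x = 0 \<longleftrightarrow> x = 0" for x unfolding T_def by simp
  have iterT: "(T ^^ i) x = (if even i then x else T x)" for i x
    by (induction i) (auto simp: TT)
  have iT0: "(T ^^ i) x \<noteq> 0" if "x \<noteq> 0" for i x
    using that by (simp add: iterT T0)
  have neg1: "(-1::'a) = 1"
  proof -
    have "(-1::'a) ^ CARD('a) = -1" by (rule fermat_ff)
    moreover have "even (CARD('a))" using assms(1,2) by simp
    ultimately show ?thesis by simp
  qed
  have cval: "c l = (if l = n then 1 else 0) - (if l = 0 then 1 else 0)" for l
    unfolding c_def by (auto simp: coeff_monom)
  have csym: "c (n - l) = c l" if "l \<le> n" for l
    using that assms(4) neg1 unfolding cval by auto
  have g0: "g \<noteq> 0" using assms(6) by auto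
  have gk: "coeff g k \<noteq> 0" using g0 unfolding k_def by simp
  have h0: "h \<noteq> 0"
  proof
    assume "h = 0"
    then have "S (coeff h) n = 0" by (auto simp: S_def intro!: sum.neutral)
    moreover have "c n = 1" unfolding cval using assms(4) by simp
    ultimately show False using cS by simp
  qed
  have hm: "coeff h m \<noteq> 0" using h0 unfolding m_def by simp
  have "S (coeff h) (m + k) = coeff h m * (T ^^ m) (coeff g k)"
    unfolding S_def by (rule collapse) auto
  then have "c (m + k) \<noteq> 0" using cS hm gk iT0 by simp
  then have nmk: "n = m + k" using assms(6) unfolding cval k_def by (auto split: if_splits)
  have modd: "odd m" using nmk assms(3,6) k_def by auto
  define hr where "hr = (\<lambda>i. coeff h (m - i))"
  have gpal: "coeff g (k - j) = T (coeff g j)" if "j \<le> k" for j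
  proof -
    have "coeff g (k - j) = T (coeff g (k - (k - j)))"
      using assms(7) unfolding theta_palindromic_def T_def k_def by (meson diff_le_self)
    then show ?thesis using that by (metis diff_diff_cancel)
  qed
  have rev: "S (coeff h) (n - l) = S hr l" if "l \<le> n" for l
  proof -
    have "S (coeff h) (n - l) = (\<Sum>i\<le>m. \<Sum>j\<le>k. if (m - i) + (k - j) = n - l
        then coeff h (m - i) * (T ^^ (m - i)) (coeff g (k - j)) else 0)"
      unfolding S_def by (rule double_rev[of "\<lambda>i j. if i + j = n - l then coeff h i * (T ^^ i) (coeff g j) else 0"])
    also have "\<dots> = S hr l"
      unfolding S_def hr_def
    proof (rule sum.cong, simp, rule sum.cong, simp)
      fix i j assume i: "i \<in> {..m}" and j: "j \<in> {..k}"
      have e1: "((m - i) + (k - j) = n - l) = (i + j = l)" using i j that nmk by auto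
      have e2: "(T ^^ (m - i)) (coeff g (k - j)) = (T ^^ i) (coeff g j)"
        using gpal[of j] j i modd by (auto simp: iterT TT)
      show "(if (m - i) + (k - j) = n - l then coeff h (m - i) * (T ^^ (m - i)) (coeff g (k - j)) else 0)
          = (if i + j = l then coeff h (m - i) * (T ^^ i) (coeff g j) else 0)"
        using e1 e2 by simp
    qed
    finally show ?thesis .
  qed
  define d where "d = (\<lambda>i. hr i - coeff h i)"
  have Sd: "S d l = S hr l - S (coeff h) l" for l
    unfolding S_def d_def sum_subtractf[symmetric]
    by (rule sum.cong[OF refl], rule sum.cong[OF refl]) (simp add: left_diff_distrib)
  have Sd0: "S d l = 0" for l
  proof (cases "l \<le> n")
    case True
    then show ?thesis using Sd rev[OF True] csym[OF True] cS by simp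
  next
    case False
    then show ?thesis unfolding S_def using nmk by (auto intro!: sum.neutral)
  qed
  have dz: "d i = 0" if "i \<le> m" for i
  proof (rule ccontr)
    assume "d i \<noteq> 0"
    define A where "A = {i. i \<le> m \<and> d i \<noteq> 0}"
    have fin: "finite A" unfolding A_def by simp
    have ne: "i \<in> A" unfolding A_def using that \<open>d i \<noteq> 0\<close> by simp
    define D where "D = Max A"
    have DA: "D \<in> A" unfolding D_def using fin ne by (intro Max_in) auto
    have Dmax: "d j = 0" if "D < j" "j \<le> m" for j
    proof (rule ccontr)
      assume "d j \<noteq> 0"
      then have "j \<in> A" using that unfolding A_def by simp
      then have "j \<le> D" unfolding D_def using fin by simp
      then show False using that by simp
    qed
    have "S d (D + k) = d D * (T ^^ D) (coeff g k)"
      unfolding S_def by (rule collapse) (use DA A_def Dmax in auto)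
    moreover have "d D \<noteq> 0" using DA A_def by simp
    ultimately show False using Sd0 gk iT0 by simp
  qed
  show ?thesis
    unfolding palindromic_def m_def[symmetric]
  proof (intro allI impI)
    fix i assume "i \<le> m"
    then have "coeff h (m - i) - coeff h i = 0" using dz unfolding d_def hr_def by simp
    then show "coeff h i = coeff h (m - i)" by simp
  qed
qed

end
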